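(* Let $k$ be a perfect field of characteristic $p>0$. Let $V$ be a $k[\mathbb Z/p\mathbb Z]$-module and $W\subset V$ a $k[\mathbb Z/p\mathbb Z]$-submodule such that $V/W$ is a free $k[\mathbb Z/p\mathbb Z]$-module. Then for every integer $n\ge2$, the quotient $V^{\otimes n}/W^{\otimes n}$ is a free $k[\mathbb Z/p\mathbb Z]$-module.
   Context: Tensor products are over $k$, and $\mathbb Z/p\mathbb Z$ acts on $V^{\otimes n}$ and $W^{\otimes n}\subset V^{\otimes n}$ diagonally. *)

theory Defs
  imports Complex_Main "HOL-Library.Function_Algebras"
begin

text \<open>A k[Z/pZ]-module is a k-vector space (scalar multiplication s) together with
  the linear action of the generator 1 of Z/pZ, a map tau with tau^p = id.  This is the
  definition of a k[Z/pZ]-basis of X/U written out over k, since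
  k[Z/pZ] has k-basis 1, tau, ..., tau^(p-1).\<close>

definition free_quot ::
  "('k::field \<Rightarrow> 'b::ab_group_add \<Rightarrow> 'b) \<Rightarrow> nat \<Rightarrow> ('b \<Rightarrow> 'b) \<Rightarrow> 'b set \<Rightarrow> 'b set \<Rightarrow> bool" where
  "free_quot s p tau X U \<longleftrightarrow>
     (\<exists>B \<subseteq> X.
        (\<forall>S c. finite S \<longrightarrow> S \<subseteq> B \<times> {..<p} \<longrightarrow>
               (\<Sum>(b,i)\<in>S. s (c (b,i)) ((tau ^^ i) b)) \<in> U \<longrightarrow> (\<forall>x\<in>S. c x = 0))
      \<and> X \<subseteq> module.span s (U \<union> {(tau ^^ i) b | b i. b \<in> B \<and> i < p}))"

text \<open>V^{\<otimes>n} is realised as the free k-vector space on V^n (finitely supported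
  functions on lists of length n) modulo the multilinearity relations.\<close>

definition fscale :: "'k::field \<Rightarrow> ('v list \<Rightarrow> 'k) \<Rightarrow> ('v list \<Rightarrow> 'k)" where
  "fscale c f = (\<lambda>xs. c * f xs)"

definition tdelta :: "'v list \<Rightarrow> ('v list \<Rightarrow> 'k::field)" where
  "tdelta xs = (\<lambda>ys. if ys = xs then 1 else 0)"

definition free_on_lists :: "nat \<Rightarrow> ('v list \<Rightarrow> 'k::field) set" where
  "free_on_lists n = module.span fscale (tdelta ` {xs. length xs = n})"

definition multilin_rels ::
  "('k::field \<Rightarrow> 'v::ab_group_add \<Rightarrow> 'v) \<Rightarrow> nat \<Rightarrow> ('v list \<Rightarrow> 'k) set" where
  "multilin_rels s n =
     {tdelta (xs[i := a + b]) - tdelta (xs[i := a]) - tdelta (xs[i := b]) | xs i a b.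
        length xs = n \<and> i < n}
   \<union> {tdelta (xs[i := s c a]) - fscale c (tdelta (xs[i := a])) | xs i c a.
        length xs = n \<and> i < n}"

text \<open>Preimage in the free space of the image of W^{\<otimes>n} in V^{\<otimes>n}: the span of the
  relations together with the pure tensors of elements of W.  The quotient of the free
  space by it is V^{\<otimes>n}/W^{\<otimes>n}.\<close>

definition tensor_sub_rels ::
  "('k::field \<Rightarrow> 'v::ab_group_add \<Rightarrow> 'v) \<Rightarrow> nat \<Rightarrow> 'v set \<Rightarrow> ('v list \<Rightarrow> 'k) set" where
  "tensor_sub_rels s n W =
     module.span fscale (multilin_rels s n \<union> tdelta ` {xs. length xs = n \<and> set xs \<subseteq> W})"

text \<open>Diagonal action: x1 \<otimes> ... \<otimes> xn \<mapsto> sigma x1 \<otimes> ... \<otimes> sigma xn;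
  on functions this is f \<mapsto> f \<circ> map (inv sigma) (sigma is bijective).\<close>

definition tensor_act :: "('v \<Rightarrow> 'v) \<Rightarrow> ('v list \<Rightarrow> 'k) \<Rightarrow> ('v list \<Rightarrow> 'k)" where
  "tensor_act sigma f = (\<lambda>ys. f (map (inv sigma) ys))"

end

theory Submission
  imports Defs
begin

lemma fscale_module: "module (fscale :: 'k::field \<Rightarrow> ('v list \<Rightarrow> 'k) \<Rightarrow> _)"
  by unfold_locales (auto simp: fscale_def fun_eq_iff algebra_simps)

lemma fscale_vs: "vector_space (fscale :: 'k::field \<Rightarrow> ('v list \<Rightarrow> 'k) \<Rightarrow> _)"
  using fscale_module by (simp add: vector_space_def module_def)

interpretation F: vector_space "fscale :: 'k::field \<Rightarrow> ('v list \<Rightarrow> 'k) \<Rightarrow> _"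
  by (rule fscale_vs)


definition fsupp :: "('a \<Rightarrow> 'k::field) \<Rightarrow> 'a set" where "fsupp f = {x. f x \<noteq> 0}"

definition Pr :: "nat \<Rightarrow> (nat \<Rightarrow> 'v \<Rightarrow> 'k::field) \<Rightarrow> 'v list \<Rightarrow> 'k" where
  "Pr n lam xs = (\<Prod>j<n. lam j (xs ! j))"

definition Phi :: "nat \<Rightarrow> (nat \<Rightarrow> 'v \<Rightarrow> 'k::field) \<Rightarrow> ('v list \<Rightarrow> 'k) \<Rightarrow> 'k" where
  "Phi n lam f = (\<Sum>xs\<in>fsupp f. f xs * Pr n lam xs)"

lemma Phi_eq: "finite A \<Longrightarrow> fsupp f \<subseteq> A \<Longrightarrow> Phi n lam f = (\<Sum>xs\<in>A. f xs * Pr n lam xs)"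
  unfolding Phi_def by (rule sum.mono_neutral_left) (auto simp: fsupp_def)

lemma fsupp_add: "fsupp (f + g) \<subseteq> fsupp f \<union> fsupp g"
  by (auto simp: fsupp_def)
lemma fsupp_diff: "fsupp (f - g) \<subseteq> fsupp f \<union> fsupp g"
  by (auto simp: fsupp_def)
lemma fsupp_scale: "fsupp (fscale c f) \<subseteq> fsupp f"
  by (auto simp: fsupp_def fscale_def)
lemma fsupp_tdelta: "fsupp (tdelta xs :: _ \<Rightarrow> 'k::field) = {xs}"
  by (auto simp: fsupp_def tdelta_def)
lemma fsupp_zero: "fsupp 0 = {}"
  by (auto simp: fsupp_def)

lemma Phi_add:
  assumes "finite (fsupp f)" "finite (fsupp g)"
  shows "Phi n lam (f + g) = Phi n lam f + Phi n lam g"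
proof -
  let ?A = "fsupp f \<union> fsupp g"
  have "Phi n lam (f + g) = (\<Sum>xs\<in>?A. (f + g) xs * Pr n lam xs)"
    by (rule Phi_eq) (use assms fsupp_add[of f g] in auto)
  also have "\<dots> = (\<Sum>xs\<in>?A. f xs * Pr n lam xs) + (\<Sum>xs\<in>?A. g xs * Pr n lam xs)"
    by (simp add: distrib_right sum.distrib)
  also have "\<dots> = Phi n lam f + Phi n lam g"
  proof -
    have "Phi n lam f = (\<Sum>xs\<in>?A. f xs * Pr n lam xs)" by (rule Phi_eq) (use assms in auto)
    moreover have "Phi n lam g = (\<Sum>xs\<in>?A. g xs * Pr n lam xs)" by (rule Phi_eq) (use assms in auto)
    ultimately show ?thesis by simp
  qed
  finally show ?thesis .
qed

lemma Phi_diff: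
  assumes "finite (fsupp f)" "finite (fsupp g)"
  shows "Phi n lam (f - g) = Phi n lam f - Phi n lam g"
proof -
  let ?A = "fsupp f \<union> fsupp g"
  have "Phi n lam (f - g) = (\<Sum>xs\<in>?A. (f - g) xs * Pr n lam xs)"
    by (rule Phi_eq) (use assms fsupp_diff[of f g] in auto)
  also have "\<dots> = (\<Sum>xs\<in>?A. f xs * Pr n lam xs) - (\<Sum>xs\<in>?A. g xs * Pr n lam xs)"
    by (simp add: left_diff_distrib sum_subtractf)
  also have "\<dots> = Phi n lam f - Phi n lam g"
  proof -
    have "Phi n lam f = (\<Sum>xs\<in>?A. f xs * Pr n lam xs)" by (rule Phi_eq) (use assms in auto)
    moreover have "Phi n lam g = (\<Sum>xs\<in>?A. g xs * Pr n lam xs)" by (rule Phi_eq) (use assms in auto)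
    ultimately show ?thesis by simp
  qed
  finally show ?thesis .
qed

lemma Phi_scale:
  assumes "finite (fsupp f)"
  shows "Phi n lam (fscale c f) = c * Phi n lam f"
proof -
  have "Phi n lam (fscale c f) = (\<Sum>xs\<in>fsupp f. fscale c f xs * Pr n lam xs)"
    using assms fsupp_scale by (intro Phi_eq) auto
  also have "\<dots> = c * Phi n lam f"
    by (simp add: Phi_def fscale_def sum_distrib_left mult.assoc)
  finally show ?thesis .
qed

lemma Phi_tdelta: "Phi n lam (tdelta xs) = Pr n lam xs"
  by (simp add: Phi_def fsupp_tdelta) (simp add: tdelta_def)

lemma Phi_zero: "Phi n lam 0 = 0"
  by (simp add: Phi_def fsupp_zero)

lemma Phi_sum:
  assumes "finite S" "\<And>x. x \<in> S \<Longrightarrow> finite (fsupp (F x))"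
  shows "finite (fsupp (sum F S)) \<and> Phi n lam (sum F S) = (\<Sum>x\<in>S. Phi n lam (F x))"
  using assms
proof (induction S rule: finite_induct)
  case empty
  then show ?case by (simp add: fsupp_def Phi_def)
next
  case (insert x S)
  then have f1: "finite (fsupp (F x))" and f2: "finite (fsupp (sum F S))"
    and e: "Phi n lam (sum F S) = (\<Sum>x\<in>S. Phi n lam (F x))" by auto
  have "finite (fsupp (F x + sum F S))"
    using f1 f2 fsupp_add[of "F x" "sum F S"] finite_subset by blast
  moreover have "Phi n lam (F x + sum F S) = Phi n lam (F x) + (\<Sum>x\<in>S. Phi n lam (F x))"
    using Phi_add[OF f1 f2] e by simp
  ultimately show ?case unfolding sum.insert[OF insert(1,2)] by blast
qed

lemma Pr_update:
  assumes "length xs = n" "i < n"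
  shows "Pr n lam (xs[i := v]) = lam i v * (\<Prod>j\<in>{..<n} - {i}. lam j (xs ! j))"
proof -
  have "Pr n lam (xs[i := v]) = lam i (xs[i:=v] ! i) * (\<Prod>j\<in>{..<n} - {i}. lam j (xs[i:=v] ! j))"
    unfolding Pr_def using assms by (subst prod.remove[of _ i]) auto
  also have "\<dots> = lam i v * (\<Prod>j\<in>{..<n} - {i}. lam j (xs ! j))"
    using assms by (intro arg_cong2[where f="(*)"] prod.cong) auto
  finally show ?thesis .
qed
lemma ml_add: "length xs = n \<Longrightarrow> i < n \<Longrightarrow>
  tdelta (xs[i := a + b]) - tdelta (xs[i := a]) - tdelta (xs[i := b]) \<in> multilin_rels s n"
  unfolding multilin_rels_def by (rule UnI1) blast

lemma ml_scale: "length xs = n \<Longrightarrow> i < n \<Longrightarrow>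
  tdelta (xs[i := s c a]) - fscale c (tdelta (xs[i := a])) \<in> multilin_rels s n"
  unfolding multilin_rels_def by (rule UnI2) blast

lemma ml_cases:
  assumes "g \<in> multilin_rels s n \<union> tdelta ` {xs. length xs = n \<and> set xs \<subseteq> W}"
  obtains (a) xs i a b where "g = tdelta (xs[i := a + b]) - tdelta (xs[i := a]) - tdelta (xs[i := b])" "length xs = n" "i < n"
      | (m) xs i c a where "g = tdelta (xs[i := s c a]) - fscale c (tdelta (xs[i := a]))" "length xs = n" "i < n"
      | (w) xs where "g = tdelta xs" "length xs = n" "set xs \<subseteq> W"
  using assms unfolding multilin_rels_def by blast

lemma Phi_R:
  fixes s :: "'k::field \<Rightarrow> 'v::ab_group_add \<Rightarrow> 'v" and lam :: "nat \<Rightarrow> 'v \<Rightarrow> 'k"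
  assumes ladd: "\<And>j x y. j < n \<Longrightarrow> lam j (x + y) = lam j x + lam j y"
    and lscale: "\<And>j c x. j < n \<Longrightarrow> lam j (s c x) = c * lam j x"
    and j0: "j0 < n" and lW: "\<And>w. w \<in> W \<Longrightarrow> lam j0 w = 0"
    and f: "f \<in> tensor_sub_rels s n W"
  shows "finite (fsupp f) \<and> Phi n lam f = 0"
proof -
  let ?G = "multilin_rels s n \<union> tdelta ` {xs. length xs = n \<and> set xs \<subseteq> W}"
  have gen: "finite (fsupp g) \<and> Phi n lam g = 0" if g: "g \<in> ?G" for g
  proof -
    have fd: "finite (fsupp (tdelta xs :: _ \<Rightarrow> 'k))" for xs by (simp add: fsupp_tdelta)
    have fsc: "finite (fsupp (fscale c (tdelta xs :: _ \<Rightarrow> 'k)))" for c xs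
      using fsupp_scale[of c "tdelta xs"] finite_subset fd by blast
    have fdd: "finite (fsupp (tdelta xs - tdelta ys :: _ \<Rightarrow> 'k))" for xs ys
      using fsupp_diff[of "tdelta xs" "tdelta ys"] finite_subset fd by blast
    from g show ?thesis
    proof (cases rule: ml_cases)
      case (a xs i a b)
      let ?Q = "\<Prod>j\<in>{..<n} - {i}. lam j (xs ! j)"
      have "Phi n lam g = Pr n lam (xs[i := a + b]) - Pr n lam (xs[i := a]) - Pr n lam (xs[i := b])"
        unfolding a(1) by (simp add: Phi_diff fdd fd Phi_tdelta)
      also have "\<dots> = (lam i (a + b) - lam i a - lam i b) * ?Q"
        using a by (simp add: Pr_update algebra_simps)
      also have "\<dots> = 0" using ladd[OF a(3)] by simp
      finally show ?thesis unfolding a(1) using fdd fd fsupp_diff finite_subset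
        by (metis finite_Un)
    next
      case (m xs i c a)
      let ?Q = "\<Prod>j\<in>{..<n} - {i}. lam j (xs ! j)"
      have "Phi n lam g = Pr n lam (xs[i := s c a]) - c * Pr n lam (xs[i := a])"
        unfolding m(1) by (simp add: Phi_diff fsc fd Phi_tdelta Phi_scale)
      also have "\<dots> = (lam i (s c a) - c * lam i a) * ?Q"
        using m by (simp add: Pr_update algebra_simps)
      also have "\<dots> = 0" using lscale[OF m(3)] by simp
      finally show ?thesis unfolding m(1) using fsc fd fsupp_diff finite_subset
        by (metis finite_Un)
    next
      case (w xs)
      have "xs ! j0 \<in> W" using w j0 nth_mem[of j0 xs] by auto
      then have "lam j0 (xs ! j0) = 0" by (rule lW)
      then have "Pr n lam xs = 0" unfolding Pr_def using j0 by (auto intro: bexI[of _ j0])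
      then show ?thesis unfolding w(1) by (simp add: fd Phi_tdelta)
    qed
  qed
  from f have "f \<in> module.span fscale ?G" unfolding tensor_sub_rels_def .
  then show ?thesis
  proof (induction rule: F.span_induct_alt)
    case base
    then show ?case by (simp add: fsupp_def Phi_def)
  next
    case (step c x y)
    have fx: "finite (fsupp x)" and px: "Phi n lam x = 0" using gen[OF step(1)] by auto
    have fcx: "finite (fsupp (fscale c x))" using fsupp_scale[of c x] fx finite_subset by blast
    have "finite (fsupp (fscale c x + y))"
      using fsupp_add[of "fscale c x" y] fcx step(2) finite_subset by blast
    moreover have "Phi n lam (fscale c x + y) = 0"
      using Phi_add[OF fcx, of y] Phi_scale[OF fx] px step(2) by simp
    ultimately show ?case by blast
  qed
qed

lemma span_map_into:
  fixes h :: "('v list \<Rightarrow> 'k::field) \<Rightarrow> ('v list \<Rightarrow> 'k)"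
  assumes hadd: "\<And>x y. h (x + y) = h x + h y" and hsc: "\<And>c x. h (fscale c x) = fscale c (h x)"
    and h0: "h 0 = 0" and Y: "F.subspace Y" and A: "\<And>a. a \<in> A \<Longrightarrow> h a \<in> Y"
    and x: "x \<in> F.span A"
  shows "h x \<in> Y"
  using x
proof (induction rule: F.span_induct_alt)
  case base
  have z: "(\<lambda>a. 0::'k) = 0" by (rule ext) simp
  show ?case using h0 F.subspace_0[OF Y] by (simp add: z)
next
  case (step c x y)
  show ?case unfolding hadd hsc by (intro F.subspace_add[OF Y] F.subspace_scale[OF Y] A step)
qed


locale tsetup = V: vector_space s
  for s :: "'k::field \<Rightarrow> 'v::ab_group_add \<Rightarrow> 'v" +
  fixes sigma :: "'v \<Rightarrow> 'v" and W :: "'v set" and p n :: nat and B :: "'v set"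
  assumes sadd: "\<And>x y. sigma (x + y) = sigma x + sigma y"
    and sscale: "\<And>c x. sigma (s c x) = s c (sigma x)"
    and order: "sigma ^^ p = id" and ppos: "p > 0"
    and Wsub: "V.subspace W" and Wstable: "sigma ` W \<subseteq> W"
    and Bind: "\<And>S c. finite S \<Longrightarrow> S \<subseteq> B \<times> {..<p} \<Longrightarrow>
               (\<Sum>(b,i)\<in>S. s (c (b,i)) ((sigma ^^ i) b)) \<in> W \<Longrightarrow> (\<forall>x\<in>S. c x = 0)"
    and Bspan: "UNIV \<subseteq> V.span (W \<union> {(sigma ^^ i) b | b i. b \<in> B \<and> i < p})"
begin

lemma pow_mod: "(sigma ^^ k) = (sigma ^^ (k mod p))"
proof -
  have "sigma ^^ k = sigma ^^ (p * (k div p) + k mod p)" by simp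
  also have "\<dots> = (sigma ^^ p) ^^ (k div p) \<circ> sigma ^^ (k mod p)"
    by (simp only: funpow_add funpow_mult mult.commute)
  finally show ?thesis using order by simp
qed

lemma pow_add: "(sigma ^^ m) (x + y) = (sigma ^^ m) x + (sigma ^^ m) y"
  by (induction m) (auto simp: sadd)

lemma pow_scale: "(sigma ^^ m) (s c x) = s c ((sigma ^^ m) x)"
  by (induction m) (auto simp: sscale)

lemma pow_W: "x \<in> W \<Longrightarrow> (sigma ^^ m) x \<in> W"
  by (induction m) (use Wstable in auto)

lemma pow_p: "(sigma ^^ p) x = x"
  using order by simp

definition C where "C = {(sigma ^^ i) b | b i. b \<in> B \<and> i < p}"

lemma C_inj:
  assumes "b \<in> B" "b' \<in> B" "i < p" "j < p" "(sigma ^^ i) b = (sigma ^^ j) b'"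
  shows "b = b' \<and> i = j"
proof (rule ccontr)
  assume ne: "\<not> (b = b' \<and> i = j)"
  then have ne2: "(b,i) \<noteq> (b',j)" by auto
  define c where "c = (\<lambda>x. if x = (b,i) then (1::'k) else -1)"
  have "(\<Sum>(b,i)\<in>{(b,i),(b',j)}. s (c (b,i)) ((sigma ^^ i) b)) = s 1 ((sigma ^^ i) b) + s (-1) ((sigma ^^ j) b')"
    using ne2 by (subst sum.insert) (auto simp: c_def)
  also have "\<dots> = 0" using assms(5) by simp
  finally have "(\<Sum>(b,i)\<in>{(b,i),(b',j)}. s (c (b,i)) ((sigma ^^ i) b)) \<in> W"
    using V.subspace_0[OF Wsub] by simp
  from Bind[OF _ _ this] assms have "c (b,i) = 0" by auto
  then show False by (simp add: c_def)
qed

lemma C_notW: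
  assumes "b \<in> B" "i < p" shows "(sigma ^^ i) b \<notin> W"
proof
  assume h: "(sigma ^^ i) b \<in> W"
  define c where "c = (\<lambda>x::'v \<times> nat. (1::'k))"
  have "(\<Sum>(b,i)\<in>{(b,i)}. s (c (b,i)) ((sigma ^^ i) b)) \<in> W" using h by (simp add: c_def)
  from Bind[OF _ _ this] assms show False by (auto simp: c_def)
qed

lemma C_W: "x \<in> C \<Longrightarrow> x \<notin> W"
  unfolding C_def using C_notW by auto

lemma B_C: "B \<subseteq> C"
proof
  fix b assume b: "b \<in> B"
  have "b = (sigma ^^ 0) b" by simp
  then show "b \<in> C" unfolding C_def using b ppos by blast
qed

lemma pow_C: "x \<in> C \<Longrightarrow> (sigma ^^ m) x \<in> C"
proof -
  assume "x \<in> C"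
  then obtain b i where b: "b \<in> B" "i < p" "x = (sigma ^^ i) b" unfolding C_def by auto
  have "(sigma ^^ m) x = (sigma ^^ (m + i)) b" using b by (simp add: funpow_add)
  also have "\<dots> = (sigma ^^ ((m + i) mod p)) b" by (subst pow_mod) (rule refl)
  finally have eq: "(sigma ^^ m) x = (sigma ^^ ((m + i) mod p)) b" .
  have "(m + i) mod p < p" using ppos by simp
  then show ?thesis unfolding C_def using b eq by blast
qed

definition EW where "EW = (SOME E. E \<subseteq> W \<and> V.independent E \<and> W \<subseteq> V.span E)"

lemma EW: "EW \<subseteq> W" "V.independent EW" "W \<subseteq> V.span EW"
proof -
  obtain E where "E \<subseteq> W" "V.independent E" "W \<subseteq> V.span E"
    by (rule V.maximal_independent_subset)
  then have "E \<subseteq> W \<and> V.independent E \<and> W \<subseteq> V.span E" by simp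
  then have "EW \<subseteq> W \<and> V.independent EW \<and> W \<subseteq> V.span EW"
    unfolding EW_def by (rule someI)
  then show "EW \<subseteq> W" "V.independent EW" "W \<subseteq> V.span EW" by simp_all
qed

lemma EW_C: "EW \<inter> C = {}"
  using EW(1) C_W by auto

definition E where "E = EW \<union> C"

lemma g_inj: "inj_on (\<lambda>(b,i). (sigma ^^ i) b) (B \<times> {..<p})"
proof (rule inj_onI)
  fix x y assume x: "x \<in> B \<times> {..<p}" and y: "y \<in> B \<times> {..<p}"
    and eq: "(case x of (b,i) \<Rightarrow> (sigma ^^ i) b) = (case y of (b,i) \<Rightarrow> (sigma ^^ i) b)"
  obtain b i where xx: "x = (b,i)" by (cases x)
  obtain b' j where yy: "y = (b',j)" by (cases y)
  show "x = y" using C_inj[of b b' i j] x y eq unfolding xx yy by simp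
qed

lemma indep_E: "V.independent E"
  unfolding V.independent_explicit_module
proof (intro allI impI)
  fix t u v assume t: "finite t" "t \<subseteq> E" and sum0: "(\<Sum>v\<in>t. s (u v) v) = 0" and v: "v \<in> t"
  define tW where "tW = t \<inter> EW"
  define tC where "tC = t - EW"
  have tC: "tC \<subseteq> C" using t unfolding tC_def E_def by auto
  have split: "(\<Sum>v\<in>t. s (u v) v) = (\<Sum>v\<in>tW. s (u v) v) + (\<Sum>v\<in>tC. s (u v) v)"
    unfolding tW_def tC_def by (rule sum.Int_Diff[OF t(1)])
  have inW: "(\<Sum>v\<in>tW. s (u v) v) \<in> W"
  proof (rule V.subspace_sum[OF Wsub])
    fix x assume "x \<in> tW"
    then have "x \<in> W" using EW(1) unfolding tW_def by blast
    then show "s (u x) x \<in> W" by (rule V.subspace_scale[OF Wsub])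
  qed
  have sC: "(\<Sum>v\<in>tC. s (u v) v) \<in> W"
  proof -
    have "(\<Sum>v\<in>tC. s (u v) v) = - (\<Sum>v\<in>tW. s (u v) v)" using split sum0
      by (simp add: eq_neg_iff_add_eq_0 add.commute)
    then show ?thesis using inW V.subspace_neg[OF Wsub] by simp
  qed
  define S where "S = {x \<in> B \<times> {..<p}. (case x of (b,i) \<Rightarrow> (sigma ^^ i) b) \<in> tC}"
  have imgS: "(\<lambda>(b,i). (sigma ^^ i) b) ` S = tC"
  proof
    show "(\<lambda>(b,i). (sigma ^^ i) b) ` S \<subseteq> tC" unfolding S_def by auto
    show "tC \<subseteq> (\<lambda>(b,i). (sigma ^^ i) b) ` S"
    proof
      fix x assume x: "x \<in> tC"
      then obtain b i where "b \<in> B" "i < p" "x = (sigma ^^ i) b" using tC unfolding C_def by auto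
      then show "x \<in> (\<lambda>(b,i). (sigma ^^ i) b) ` S" using x
        by (intro image_eqI[of _ _ "(b,i)"]) (simp_all add: S_def)
    qed
  qed
  have injS: "inj_on (\<lambda>(b,i). (sigma ^^ i) b) S"
    by (rule inj_on_subset[OF g_inj]) (auto simp: S_def)
  have finS: "finite S"
  proof -
    have "finite tC" using t(1) unfolding tC_def by simp
    then show ?thesis using finite_imageD[OF _ injS] imgS by simp
  qed
  have "(\<Sum>(b,i)\<in>S. s (u ((sigma ^^ i) b)) ((sigma ^^ i) b)) = (\<Sum>v\<in>tC. s (u v) v)"
    using sum.reindex[OF injS, of "\<lambda>v. s (u v) v"] imgS by (simp add: case_prod_unfold)
  then have "(\<Sum>(b,i)\<in>S. s ((\<lambda>(b,i). u ((sigma ^^ i) b)) (b,i)) ((sigma ^^ i) b)) \<in> W"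
    using sC by simp
  from Bind[OF finS _ this] have zC: "\<forall>x\<in>S. (\<lambda>(b,i). u ((sigma ^^ i) b)) x = 0"
    by (auto simp: S_def)
  have zC': "\<forall>v\<in>tC. u v = 0" using zC imgS by auto
  then have "(\<Sum>v\<in>tC. s (u v) v) = 0" by simp
  then have "(\<Sum>v\<in>tW. s (u v) v) = 0" using split sum0 by simp
  then have zW: "\<forall>v\<in>tW. u v = 0"
    using EW(2) t(1) unfolding V.independent_explicit_module tW_def by auto
  show "u v = 0" using v zW zC' unfolding tW_def tC_def by auto
qed

lemma span_E: "V.span E = UNIV"
proof -
  have "W \<union> C \<subseteq> V.span E"
    using EW(3) V.span_mono[of EW E] V.span_superset[of E] unfolding E_def by blast
  then have "V.span (W \<union> C) \<subseteq> V.span E" using V.span_minimal V.subspace_span by blast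
  then show ?thesis using Bspan unfolding C_def by auto
qed

definition r where "r e v = V.representation E v e"

lemma r_add: "r e (x + y) = r e x + r e y"
  unfolding r_def using V.representation_add[OF indep_E, of y x] span_E by simp

lemma r_scale: "r e (s c x) = c * r e x"
  unfolding r_def using V.representation_scale[OF indep_E, of x c] span_E by simp

lemma r_basis: "e' \<in> E \<Longrightarrow> r e e' = (if e = e' then 1 else 0)"
  unfolding r_def using V.representation_basis[OF indep_E] by simp

lemma r_W: "w \<in> W \<Longrightarrow> r e w \<noteq> 0 \<Longrightarrow> e \<in> EW"
proof -
  assume w: "w \<in> W" and ne: "r e w \<noteq> 0"
  have "V.representation E w = V.representation EW w"
    by (rule V.representation_extend[OF indep_E]) (use w EW(3) in \<open>auto simp: E_def\<close>)
  then show "e \<in> EW" using ne V.representation_ne_zero unfolding r_def by metis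
qed


lemma sigma_bij: "bij sigma"
proof (rule o_bij)
  have "sigma ^^ p = sigma ^^ (Suc (p - 1))" using ppos by simp
  then show "sigma \<circ> sigma ^^ (p - 1) = id" using order by (simp only: funpow.simps(2))
  show "sigma ^^ (p - 1) \<circ> sigma = id" using order \<open>sigma ^^ p = sigma ^^ (Suc (p - 1))\<close>
    by (simp only: funpow_Suc_right)
qed

lemma ta_tdelta: "tensor_act sigma (tdelta xs :: _ \<Rightarrow> 'k) = tdelta (map sigma xs)"
proof -
  have "(map (inv sigma) ys = xs) = (ys = map sigma xs)" for ys
  proof
    assume "map (inv sigma) ys = xs"
    then have "map sigma xs = map (sigma \<circ> inv sigma) ys" by auto
    also have "\<dots> = ys"
    proof -
      have "sigma \<circ> inv sigma = id" using sigma_bij bij_is_surj surj_iff by blast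
      then show ?thesis by simp
    qed
    finally show "ys = map sigma xs" by simp
  next
    assume "ys = map sigma xs"
    moreover have "inv sigma \<circ> sigma = id" using sigma_bij bij_is_inj inv_o_cancel by blast
    ultimately show "map (inv sigma) ys = xs" by simp
  qed
  then show ?thesis unfolding tensor_act_def tdelta_def by simp
qed

lemma ta_pow_tdelta: "(tensor_act sigma ^^ i) (tdelta xs :: _ \<Rightarrow> 'k) = tdelta (map (sigma ^^ i) xs)"
  by (induction i) (simp_all add: ta_tdelta comp_def)

lemma ta_add: "tensor_act sigma (f + g :: _ \<Rightarrow> 'k) = tensor_act sigma f + tensor_act sigma g"
  unfolding tensor_act_def by (rule ext) simp
lemma ta_diff: "tensor_act sigma (f - g :: _ \<Rightarrow> 'k) = tensor_act sigma f - tensor_act sigma g"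
  unfolding tensor_act_def by (rule ext) simp
lemma ta_scale: "tensor_act sigma (fscale c f :: _ \<Rightarrow> 'k) = fscale c (tensor_act sigma f)"
  unfolding tensor_act_def fscale_def by (rule ext) simp
lemma ta_zero: "tensor_act sigma (0 :: _ \<Rightarrow> 'k) = 0"
  unfolding tensor_act_def by (rule ext) simp

lemma ta_R:
  assumes f: "f \<in> tensor_sub_rels s n W"
  shows "tensor_act sigma f \<in> tensor_sub_rels s n W"
proof -
  let ?G = "multilin_rels s n \<union> tdelta ` {xs. length xs = n \<and> set xs \<subseteq> W}"
  have G: "tensor_act sigma g \<in> ?G" if g: "g \<in> ?G" for g
  proof -
    from g show ?thesis
    proof (cases rule: ml_cases)
      case (a xs i a b)
      have eq: "tensor_act sigma g = tdelta ((map sigma xs)[i := sigma a + sigma b]) - tdelta ((map sigma xs)[i := sigma a]) - tdelta ((map sigma xs)[i := sigma b])"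
        unfolding a(1) by (simp only: ta_diff ta_tdelta map_update sadd)
      have "tdelta ((map sigma xs)[i := sigma a + sigma b]) - tdelta ((map sigma xs)[i := sigma a]) - tdelta ((map sigma xs)[i := sigma b]) \<in> multilin_rels s n"
        by (rule ml_add) (use a in simp_all)
      then show ?thesis unfolding eq by (rule UnI1)
    next
      case (m xs i c a)
      have eq: "tensor_act sigma g = tdelta ((map sigma xs)[i := s c (sigma a)]) - fscale c (tdelta ((map sigma xs)[i := sigma a]))"
        unfolding m(1) by (simp only: ta_diff ta_tdelta ta_scale map_update sscale)
      have "tdelta ((map sigma xs)[i := s c (sigma a)]) - fscale c (tdelta ((map sigma xs)[i := sigma a])) \<in> multilin_rels s n"
        by (rule ml_scale) (use m in simp_all)
      then show ?thesis unfolding eq by (rule UnI1)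
    next
      case (w xs)
      have eq: "tensor_act sigma g = tdelta (map sigma xs)" unfolding w(1) by (rule ta_tdelta)
      have "set (map sigma xs) \<subseteq> W" using w(3) Wstable by (simp only: set_map) (rule subset_trans[OF image_mono])
      then have "map sigma xs \<in> {xs. length xs = n \<and> set xs \<subseteq> W}" using w(2) by simp
      then show ?thesis unfolding eq by (intro UnI2 imageI)
    qed
  qed
  have f': "f \<in> F.span ?G" using f unfolding tensor_sub_rels_def .
  show ?thesis
    unfolding tensor_sub_rels_def
    by (rule span_map_into[OF ta_add ta_scale ta_zero F.subspace_span _ f']) (rule F.span_base, erule G)
qed

definition T where "T = {zs. length zs = n \<and> (\<exists>j0<n. (\<forall>j<j0. zs ! j \<in> EW) \<and> zs ! j0 \<in> B \<and> (\<forall>j. j0 < j \<and> j < n \<longrightarrow> zs ! j \<in> E))}"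

definition Gen :: "('v list \<Rightarrow> 'k) set" where
  "Gen = {(tensor_act sigma ^^ i) b | b i. b \<in> tdelta ` T \<and> i < p}"

definition X where "X = F.span (tensor_sub_rels s n W \<union> Gen)"

lemma X_sub: "F.subspace X" unfolding X_def by simp
lemma R_X: "tensor_sub_rels s n W \<subseteq> X" unfolding X_def using F.span_superset by blast
lemma Gen_X: "Gen \<subseteq> X" unfolding X_def using F.span_superset by blast

lemma X_ta: assumes xX: "x \<in> X" shows "tensor_act sigma x \<in> X"
  unfolding X_def
proof (rule span_map_into[OF ta_add ta_scale ta_zero F.subspace_span _ xX[unfolded X_def]])
  fix a assume a: "a \<in> tensor_sub_rels s n W \<union> Gen"
  show "tensor_act sigma a \<in> F.span (tensor_sub_rels s n W \<union> Gen)"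
  proof (cases "a \<in> tensor_sub_rels s n W")
    case True
    then show ?thesis using ta_R F.span_superset by blast
  next
    case False
    then obtain ts i where ts: "ts \<in> T" "i < p" "a = (tensor_act sigma ^^ i) (tdelta ts)"
      using a unfolding Gen_def by blast
    have e: "tensor_act sigma a = (tensor_act sigma ^^ Suc i) (tdelta ts)" using ts by simp
    show ?thesis
    proof (cases "Suc i < p")
      case True
      then have "tensor_act sigma a \<in> Gen" unfolding Gen_def e using ts by blast
      then show ?thesis using F.span_superset by blast
    next
      case False
      then have "Suc i = p" using ts by simp
      then have "tensor_act sigma a = (tensor_act sigma ^^ 0) (tdelta ts)"
        unfolding e by (simp only: ta_pow_tdelta order) simp
      then have "tensor_act sigma a \<in> Gen" unfolding Gen_def using ts ppos by blast
      then show ?thesis using F.span_superset by blast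
    qed
  qed
qed

lemma X_ta_pow: "x \<in> X \<Longrightarrow> (tensor_act sigma ^^ d) x \<in> X"
  by (induction d) (simp_all add: X_ta)

lemma ml_in_R: "g \<in> multilin_rels s n \<Longrightarrow> g \<in> tensor_sub_rels s n W"
  unfolding tensor_sub_rels_def by (rule F.span_base, rule UnI1)

lemma grp1: "- ((a::'a::ab_group_add) - a - a) = a" by (simp add: algebra_simps)
lemma grp2: "(a::'a::ab_group_add) = (a - b - d) + (b - f) + f + d" by (simp add: algebra_simps)

lemma expand_one:
  assumes Y: "F.subspace Y" and RY: "tensor_sub_rels s n W \<subseteq> Y"
    and len: "length zs = n" and m: "m < n" and v: "v \<in> V.span A"
    and hA: "\<And>a. a \<in> A \<Longrightarrow> tdelta (zs[m := a]) \<in> Y"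
  shows "tdelta (zs[m := v]) \<in> Y"
  using v
proof (induction rule: V.span_induct_alt)
  case base
  have "tdelta (zs[m := 0 + 0]) - tdelta (zs[m := 0]) - tdelta (zs[m := 0]) \<in> multilin_rels s n"
    using len m by (rule ml_add)
  then have "tdelta (zs[m := 0]) - tdelta (zs[m := 0]) - tdelta (zs[m := 0]) \<in> Y"
    unfolding add_0_left by (rule subsetD[OF RY ml_in_R])
  then have "- (tdelta (zs[m := 0]) - tdelta (zs[m := 0]) - tdelta (zs[m := 0])) \<in> Y"
    by (rule F.subspace_neg[OF Y])
  then show ?case unfolding grp1 .
next
  case (step c a y)
  let ?r1 = "tdelta (zs[m := s c a + y]) - tdelta (zs[m := s c a]) - tdelta (zs[m := y])"
  let ?r2 = "tdelta (zs[m := s c a]) - fscale c (tdelta (zs[m := a]))"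
  have "?r1 \<in> multilin_rels s n" using len m by (rule ml_add)
  then have r1: "?r1 \<in> Y" by (rule subsetD[OF RY ml_in_R])
  have "?r2 \<in> multilin_rels s n" using len m by (rule ml_scale)
  then have r2: "?r2 \<in> Y" by (rule subsetD[OF RY ml_in_R])
  have r3: "fscale c (tdelta (zs[m := a])) \<in> Y" by (rule F.subspace_scale[OF Y hA[OF step(1)]])
  have eq: "tdelta (zs[m := s c a + y]) = ?r1 + ?r2 + fscale c (tdelta (zs[m := a])) + tdelta (zs[m := y])"
    by (rule grp2)
  have "?r1 + ?r2 + fscale c (tdelta (zs[m := a])) + tdelta (zs[m := y]) \<in> Y"
    by (intro F.subspace_add[OF Y] r1 r2 r3 step(2))
  then show ?case by (simp only: eq[symmetric])
qed

lemma expand_all: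
  assumes Y: "F.subspace Y" and RY: "tensor_sub_rels s n W \<subseteq> Y"
    and hyp: "\<And>zs. length zs = n \<Longrightarrow> (\<forall>j<n. zs ! j \<in> A j) \<Longrightarrow> tdelta zs \<in> Y"
    and len: "length xs = n" and xs: "\<forall>j<n. xs ! j \<in> V.span (A j)"
  shows "tdelta xs \<in> Y"
proof -
  have Q: "\<forall>zs. length zs = n \<and> (\<forall>j<n. (j < m \<longrightarrow> zs ! j \<in> V.span (A j)) \<and> (m \<le> j \<longrightarrow> zs ! j \<in> A j)) \<longrightarrow> tdelta zs \<in> Y" for m
  proof (induction m)
    case 0
    then show ?case using hyp by auto
  next
    case (Suc m)
    show ?case
    proof (intro allI impI)
      fix zs assume zs: "length zs = n \<and> (\<forall>j<n. (j < Suc m \<longrightarrow> zs ! j \<in> V.span (A j)) \<and> (Suc m \<le> j \<longrightarrow> zs ! j \<in> A j))"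
      show "tdelta zs \<in> Y"
      proof (cases "m < n")
        case False
        then have "length zs = n \<and> (\<forall>j<n. (j < m \<longrightarrow> zs ! j \<in> V.span (A j)) \<and> (m \<le> j \<longrightarrow> zs ! j \<in> A j))"
          using zs by auto
        then show ?thesis using Suc.IH by blast
      next
        case True
        have "tdelta (zs[m := zs ! m]) \<in> Y"
        proof (rule expand_one[OF Y RY _ True])
          show "length zs = n" using zs by blast
          show "zs ! m \<in> V.span (A m)" using zs True by blast
          fix a assume a: "a \<in> A m"
          have "length (zs[m := a]) = n \<and> (\<forall>j<n. (j < m \<longrightarrow> zs[m := a] ! j \<in> V.span (A j)) \<and> (m \<le> j \<longrightarrow> zs[m := a] ! j \<in> A j))"
            using zs a by (auto simp: nth_list_update)
          then show "tdelta (zs[m := a]) \<in> Y" using Suc.IH by blast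
        qed
        then show ?thesis by simp
      qed
    qed
  qed
  show ?thesis using Q[of n] len xs by auto
qed

lemma T_E: "ts \<in> T \<Longrightarrow> j < n \<Longrightarrow> ts ! j \<in> E"
  unfolding T_def E_def using B_C by (auto simp: linorder_neq_iff) (metis linorder_neqE_nat subsetD)

lemma anchor:
  assumes len: "length ys = n" and j0: "j0 < n" and bef: "\<forall>j<j0. ys ! j \<in> W"
    and b: "b \<in> B" and d: "d < p" and at: "ys ! j0 = (sigma ^^ d) b"
  shows "tdelta ys \<in> X"
proof -
  define zs where "zs = map (sigma ^^ (p - d)) ys"
  have lz: "length zs = n" using len by (simp add: zs_def)
  have zb: "zs ! j0 = b"
  proof -
    have "zs ! j0 = (sigma ^^ (p - d)) ((sigma ^^ d) b)" using j0 len at by (simp add: zs_def)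
    also have "\<dots> = (sigma ^^ (p - d + d)) b" by (simp add: funpow_add)
    also have "p - d + d = p" using d by simp
    finally show ?thesis using pow_p by simp
  qed
  define A where "A j = (if j < j0 then EW else if j = j0 then {b} else E)" for j
  have "tdelta zs \<in> X"
  proof (rule expand_all[OF X_sub R_X _ lz])
    fix zs' :: "'v list" assume l': "length zs' = n" and h: "\<forall>j<n. zs' ! j \<in> A j"
    have h1: "zs' ! j \<in> EW" if "j < j0" for j using h[rule_format, of j] that j0 by (simp add: A_def)
    have h2: "zs' ! j0 \<in> B" using h[rule_format, OF j0] b by (simp add: A_def)
    have h3: "zs' ! j \<in> E" if "j0 < j" "j < n" for j using h[rule_format, of j] that by (simp add: A_def)
    have "zs' \<in> T" unfolding T_def using l' j0 h1 h2 h3 by blast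
    then have "(tensor_act sigma ^^ 0) (tdelta zs') \<in> Gen" unfolding Gen_def using ppos by blast
    then show "tdelta zs' \<in> X" using Gen_X by auto
  next
    show "\<forall>j<n. zs ! j \<in> V.span (A j)"
    proof (intro allI impI)
      fix j assume jn: "j < n"
      show "zs ! j \<in> V.span (A j)"
      proof (cases "j < j0")
        case True
        then have "zs ! j \<in> W" using bef pow_W jn len by (simp add: zs_def)
        then show ?thesis using EW(3) True by (auto simp: A_def)
      next
        case False
        then show ?thesis using zb V.span_base[of b "{b}"] span_E by (auto simp: A_def)
      qed
    qed
  qed
  moreover have "(tdelta ys :: _ \<Rightarrow> 'k) = (tensor_act sigma ^^ d) (tdelta zs)"
  proof -
    have "map (sigma ^^ d) zs = map ((sigma ^^ d) \<circ> (sigma ^^ (p - d))) ys" by (simp add: zs_def)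
    also have "(sigma ^^ d) \<circ> (sigma ^^ (p - d)) = sigma ^^ (d + (p - d))" by (simp add: funpow_add)
    also have "d + (p - d) = p" using d by simp
    finally have "map (sigma ^^ d) zs = ys" using order by simp
    then show ?thesis by (simp add: ta_pow_tdelta)
  qed
  ultimately show ?thesis using X_ta_pow by simp
qed

lemma all_in_X:
  assumes len: "length xs = n" shows "tdelta xs \<in> X"
proof (rule expand_all[OF X_sub R_X _ len, of "\<lambda>j. E"])
  show "\<forall>j<n. xs ! j \<in> V.span E" using span_E by simp
  fix zs :: "'v list" assume lz: "length zs = n" and h: "\<forall>j<n. zs ! j \<in> E"
  show "tdelta zs \<in> X"
  proof (cases "\<forall>j<n. zs ! j \<in> EW")
    case True
    have "set zs \<subseteq> W"
    proof
      fix x assume "x \<in> set zs"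
      then obtain i where "i < length zs" "zs ! i = x" by (auto simp: in_set_conv_nth)
      then show "x \<in> W" using True EW(1) lz by auto
    qed
    then have "tdelta zs \<in> tensor_sub_rels s n W"
      unfolding tensor_sub_rels_def using lz by (intro F.span_base) blast
    then show ?thesis using R_X by blast
  next
    case False
    define P where "P j = (j < n \<and> zs ! j \<notin> EW)" for j
    have ex: "\<exists>j. P j" using False by (auto simp: P_def)
    define j0 where "j0 = (LEAST j. P j)"
    have Pj0: "P j0" unfolding j0_def using LeastI_ex[OF ex] .
    have bef: "\<forall>j<j0. zs ! j \<in> EW"
    proof (intro allI impI)
      fix j assume "j < j0"
      then have "\<not> P j" unfolding j0_def by (rule not_less_Least)
      moreover have "j < n" using \<open>j < j0\<close> Pj0 by (simp add: P_def)
      ultimately show "zs ! j \<in> EW" by (simp add: P_def)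
    qed
    have "zs ! j0 \<in> C" using Pj0 h unfolding P_def E_def by auto
    then obtain b d where bd: "b \<in> B" "d < p" "zs ! j0 = (sigma ^^ d) b" unfolding C_def by blast
    show ?thesis
      using anchor[OF lz _ _ bd] Pj0 bef EW(1) by (auto simp: P_def)
  qed
qed

lemma spanning: "free_on_lists n \<subseteq> X"
  unfolding free_on_lists_def using all_in_X by (intro F.span_minimal X_sub) auto

lemma keyprod:
  assumes es: "es \<in> T" and ts: "ts \<in> T" and m: "m < p"
    and nz: "(\<Prod>j<n. r (es ! j) ((sigma ^^ m) (ts ! j))) \<noteq> 0"
  shows "m = 0 \<and> ts = es"
proof -
  have nzj: "r (es ! j) ((sigma ^^ m) (ts ! j)) \<noteq> 0" if "j < n" for j
    using nz that by auto
  have P1: "es ! j \<in> EW" if "j < n" "ts ! j \<in> EW" for j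
    using r_W[OF pow_W nzj[OF that(1)]] EW(1) that(2) by blast
  have P2: "es ! j = (sigma ^^ m) (ts ! j)" if "j < n" "ts ! j \<in> C" for j
  proof -
    have "(sigma ^^ m) (ts ! j) \<in> E" using pow_C[OF that(2)] by (simp add: E_def)
    then show ?thesis using nzj[OF that(1)] r_basis by (auto split: if_splits)
  qed
  obtain j0 where j0: "j0 < n" "\<forall>j<j0. es ! j \<in> EW" "es ! j0 \<in> B" and les: "length es = n"
    using es unfolding T_def by blast
  obtain j1 where j1: "j1 < n" "\<forall>j<j1. ts ! j \<in> EW" "ts ! j1 \<in> B" and lts: "length ts = n"
    using ts unfolding T_def by blast
  have "\<not> j1 < j0"
  proof
    assume "j1 < j0"
    then have "es ! j1 \<in> EW" using j0 by blast
    moreover have "es ! j1 \<in> C" using P2[OF j1(1)] j1(3) B_C pow_C by auto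
    ultimately show False using EW_C by blast
  qed
  moreover have "\<not> j0 < j1"
  proof
    assume "j0 < j1"
    then have "es ! j0 \<in> EW" using P1 j1 j0 by blast
    then show False using j0(3) B_C EW_C by blast
  qed
  ultimately have "j0 = j1" by simp
  then have "(sigma ^^ 0) (es ! j0) = (sigma ^^ m) (ts ! j0)" using P2[OF j0(1)] j1(3) B_C by auto
  then have m0: "m = 0" using C_inj[of "es ! j0" "ts ! j0" 0 m] j0(3) j1(3) \<open>j0 = j1\<close> m ppos by auto
  have "ts = es"
  proof (rule nth_equalityI)
    show "length ts = length es" using les lts by simp
    fix j assume "j < length ts"
    then have jn: "j < n" using lts by simp
    have "r (es ! j) (ts ! j) \<noteq> 0" using nzj[OF jn] m0 by simp
    then show "ts ! j = es ! j" using r_basis[OF T_E[OF ts jn]] by (auto split: if_splits)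
  qed
  then show ?thesis using m0 by simp
qed

lemma prod_one: "es \<in> T \<Longrightarrow> (\<Prod>j<n. r (es ! j) (es ! j)) = 1"
  using r_basis T_E by (intro prod.neutral) auto

lemma mod_zero_iff: "i < p \<Longrightarrow> i0 < p \<Longrightarrow> ((p - i0 + i) mod p = 0) = (i = i0)"
proof -
  assume i: "i < p" and i0: "i0 < p"
  show ?thesis
  proof (cases "i < i0")
    case True
    then have "(p - i0 + i) mod p = p - i0 + i" using i i0 by simp
    then show ?thesis using True i0 by simp
  next
    case False
    then have "(p - i0 + i) mod p = ((p - i0 + i) - p) mod p" using i0 by (simp add: le_mod_geq)
    also have "(p - i0 + i) - p = i - i0" using False i0 by simp
    also have "(i - i0) mod p = i - i0" using i by simp
    finally show ?thesis using False by simp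
  qed
qed

lemma independence:
  assumes S: "finite S" "S \<subseteq> tdelta ` T \<times> {..<p}"
    and inR: "(\<Sum>(b,i)\<in>S. fscale (c (b,i)) ((tensor_act sigma ^^ i) b)) \<in> tensor_sub_rels s n W"
    and x0: "x0 \<in> S"
  shows "c x0 = 0"
proof -
  obtain es i0 where x0e: "x0 = (tdelta es, i0)" and es: "es \<in> T" and i0: "i0 < p"
    using x0 S(2) by blast
  obtain j0 where j0: "j0 < n" "es ! j0 \<in> B"
    using es unfolding T_def by blast
  define lam where "lam j v = r (es ! j) ((sigma ^^ (p - i0)) v)" for j v
  have lW: "lam j0 w = 0" if "w \<in> W" for w
  proof (rule ccontr)
    assume "lam j0 w \<noteq> 0"
    then have "es ! j0 \<in> EW" unfolding lam_def using r_W pow_W that by blast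
    then show False using j0(2) B_C EW_C by blast
  qed
  have Ph0: "Phi n lam (\<Sum>(b,i)\<in>S. fscale (c (b,i)) ((tensor_act sigma ^^ i) b)) = 0"
    using Phi_R[where lam=lam and s=s, OF _ _ j0(1) lW inR]
    by (simp add: lam_def pow_add pow_scale r_add r_scale)
  define Fx where "Fx = (\<lambda>(b,i). fscale (c (b,i)) ((tensor_act sigma ^^ i) b))"
  have val: "Phi n lam (Fx x) = (if x = x0 then c x0 else 0)" if x: "x \<in> S" for x
  proof -
    obtain ts i where xe: "x = (tdelta ts, i)" and ts: "ts \<in> T" and i: "i < p"
      using x S(2) by blast
    have lts: "length ts = n" using ts unfolding T_def by blast
    have fd: "finite (fsupp (tdelta (map (sigma ^^ i) ts) :: _ \<Rightarrow> 'k))" by (simp add: fsupp_tdelta)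
    have "Phi n lam (Fx x) = c x * Pr n lam (map (sigma ^^ i) ts)"
      unfolding Fx_def xe by (simp add: ta_pow_tdelta Phi_scale[OF fd] Phi_tdelta)
    also have "Pr n lam (map (sigma ^^ i) ts) = (\<Prod>j<n. r (es ! j) ((sigma ^^ ((p - i0 + i) mod p)) (ts ! j)))"
    proof -
      have "(sigma ^^ (p - i0)) ((sigma ^^ i) y) = (sigma ^^ ((p - i0 + i) mod p)) y" for y
      proof -
        have "(sigma ^^ (p - i0)) ((sigma ^^ i) y) = (sigma ^^ (p - i0 + i)) y" by (simp add: funpow_add)
        also have "\<dots> = (sigma ^^ ((p - i0 + i) mod p)) y" by (subst pow_mod) (rule refl)
        finally show ?thesis .
      qed
      then show ?thesis unfolding Pr_def lam_def using lts by (intro prod.cong) auto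
    qed
    also have "\<dots> = (if ts = es \<and> i = i0 then 1 else 0)"
    proof (cases "ts = es \<and> i = i0")
      case True
      moreover have "p - i0 + i0 = p" using i0 by simp
      ultimately show ?thesis using prod_one[OF es] by simp
    next
      case False
      have mlt: "(p - i0 + i) mod p < p" using ppos by simp
      have "\<not> ((p - i0 + i) mod p = 0 \<and> ts = es)" using False mod_zero_iff[OF i i0] by auto
      then have "(\<Prod>j<n. r (es ! j) ((sigma ^^ ((p - i0 + i) mod p)) (ts ! j))) = 0"
        using keyprod[OF es ts mlt] by blast
      then show ?thesis unfolding if_not_P[OF False] .
    qed
    also have "(ts = es \<and> i = i0) = (x = x0)"
    proof -
      have "(tdelta ts :: _ \<Rightarrow> 'k) = tdelta es \<longleftrightarrow> ts = es"
        by (auto simp: tdelta_def fun_eq_iff)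
      then show ?thesis unfolding xe x0e by auto
    qed
    finally show ?thesis by auto
  qed
  have fs: "finite (fsupp (Fx x))" if xS: "x \<in> S" for x
  proof -
    obtain ts i where xe: "x = (tdelta ts, i)" using xS S(2) by blast
    have "finite (fsupp (tdelta (map (sigma ^^ i) ts) :: _ \<Rightarrow> 'k))" by (simp add: fsupp_tdelta)
    then show ?thesis unfolding Fx_def xe using fsupp_scale finite_subset by (metis case_prod_conv ta_pow_tdelta)
  qed
  have "Phi n lam (sum Fx S) = (\<Sum>x\<in>S. Phi n lam (Fx x))" using Phi_sum[of S Fx, OF S(1) fs] by blast
  also have "\<dots> = (\<Sum>x\<in>S. (if x = x0 then c x0 else 0))" using val by (rule sum.cong[OF refl])
  also have "\<dots> = c x0" using S(1) x0 by simp
  finally show ?thesis using Ph0 unfolding Fx_def by simp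
qed

lemma final: "free_quot fscale p (tensor_act sigma) (free_on_lists n) (tensor_sub_rels s n W)"
  unfolding free_quot_def
proof (intro exI[of _ "tdelta ` T"] conjI allI impI)
  show "tdelta ` T \<subseteq> free_on_lists n"
    unfolding free_on_lists_def T_def by (auto intro: F.span_base)
  show "free_on_lists n \<subseteq> F.span (tensor_sub_rels s n W \<union> {(tensor_act sigma ^^ i) b |b i. b \<in> tdelta ` T \<and> i < p})"
    using spanning unfolding X_def Gen_def .
  fix S c assume "finite S" "S \<subseteq> tdelta ` T \<times> {..<p}"
    "(\<Sum>(b, i)\<in>S. fscale (c (b, i)) ((tensor_act sigma ^^ i) b)) \<in> tensor_sub_rels s n W"
  then show "\<forall>x\<in>S. c x = 0" using independence by blast
qed


end

theorem lemma2p8: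
  fixes s :: "'k::field \<Rightarrow> 'v::ab_group_add \<Rightarrow> 'v"
    and sigma :: "'v \<Rightarrow> 'v"
    and W :: "'v set"
    and p n :: nat
  assumes char: "CHAR('k) = p" and ppos: "p > 0"
    and perfect: "surj (\<lambda>x::'k. x ^ p)"
    and vs: "vector_space s"
    and lin: "Vector_Spaces.linear s s sigma"
    and order: "sigma ^^ p = id"
    and Wsub: "module.subspace s W"
    and Wstable: "sigma ` W \<subseteq> W"
    and free: "free_quot s p sigma UNIV W"
    and n: "n \<ge> 2"
  shows "free_quot fscale p (tensor_act sigma) (free_on_lists n) (tensor_sub_rels s n W)"
proof -
  obtain B0 where
    Bind: "\<forall>S c. finite S \<longrightarrow> S \<subseteq> B0 \<times> {..<p} \<longrightarrow>
               (\<Sum>(b,i)\<in>S. s (c (b,i)) ((sigma ^^ i) b)) \<in> W \<longrightarrow> (\<forall>x\<in>S. c x = 0)"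
    and Bspan: "UNIV \<subseteq> module.span s (W \<union> {(sigma ^^ i) b | b i. b \<in> B0 \<and> i < p})"
    using free unfolding free_quot_def by blast
  have lin': "(\<forall>x y. sigma (x + y) = sigma x + sigma y) \<and> (\<forall>c x. sigma (s c x) = s c (sigma x))"
    using lin unfolding Vector_Spaces.linear_iff by blast
  then have sadd: "\<And>x y. sigma (x + y) = sigma x + sigma y"
    and sscale: "\<And>c x. sigma (s c x) = s c (sigma x)" by blast+
  have "tsetup s sigma W p B0"
    unfolding tsetup_def tsetup_axioms_def
    using vs sadd sscale order ppos Wsub Wstable Bind Bspan by blast
  then show ?thesis by (rule tsetup.final)
qed

end
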